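(* Let $V$ be a vector space over a field $\mathbb{K}$, $F$ a bilinear form on $V$, $p\ge2$ and $x_1,\dots,x_p\in V$. Then $$\lambda_F(x_1\otimes\cdots\otimes x_p)=x_1\otimes\cdots\otimes x_p+\sum_{k=1}^{[p/2]}\ \sum_{(i_1,j_1,\dots,i_k,j_k)}(-1)^{\sigma}F(x_{i_1},x_{j_1})\cdots F(x_{i_k},x_{j_k})\,X_{(i_1,\dots,j_k)},$$ where $[p/2]$ is the floor of $p/2$; the inner sum is over pairwise distinct indices $i_1,j_1,\dots,i_k,j_k\in\{1,\dots,p\}$ with $i_l<j_l$ for each $l$ and $i_1<i_2<\cdots<i_k$; $X_{(i_1,\dots,j_k)}$ denotes $x_1\otimes\cdots\otimes x_p$ with the factors $x_{i_1},x_{j_1},\dots,x_{i_k},x_{j_k}$ omitted; and $(-1)^\sigma$ is the sign of the permutation of $\{1,\dots,p\}$ given by the sequence $i_1,j_1,\dots,i_k,j_k$ followed by the remaining indices in increasing order.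
   Context: $\mathcal{T}(V)$ is the tensor algebra of $V$. For $f\in V^*$, $i_f$ is the unique linear map on $\mathcal{T}(V)$ with $i_f(1)=0$ and $i_f(x\otimes u)=f(x)u-x\otimes i_f(u)$ ($x\in V$); $i_x^F:=i_{f_x}$ with $f_x(y)=F(x,y)$. $\Lambda_F:\mathcal{T}(V)\to\mathrm{End}(\mathcal{T}(V))$ is the unique unital algebra homomorphism with $\Lambda_F(x)(u)=x\otimes u+i_x^F(u)$ for $x\in V$, and $\lambda_F(u):=\Lambda_F(u)(1)$. *)

theory Defs
  imports "HOL-Library.Poly_Mapping" "HOL-Combinatorics.Permutations"
begin

text \<open>Model: V is the K-vector space 'b \<Rightarrow>0 'k (finitely supported coordinate vectors
w.r.t. the basis indexed by 'b); its tensor algebra T(V) is 'b list \<Rightarrow>0 'k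
(a word b1...bn stands for e_b1 (x) ... (x) e_bn).\<close>

type_synonym ('b,'k) vec = "'b \<Rightarrow>\<^sub>0 'k"
type_synonym ('b,'k) tens = "'b list \<Rightarrow>\<^sub>0 'k"

definition vsmult :: "'k::field \<Rightarrow> ('a \<Rightarrow>\<^sub>0 'k) \<Rightarrow> ('a \<Rightarrow>\<^sub>0 'k)" where
  "vsmult a v = Poly_Mapping.map (\<lambda>c. a * c) v"

definition lin_map :: "('k \<Rightarrow> 'u \<Rightarrow> 'u) \<Rightarrow> ('k \<Rightarrow> 'w \<Rightarrow> 'w) \<Rightarrow> ('u::plus \<Rightarrow> 'w::plus) \<Rightarrow> bool" where
  "lin_map s1 s2 g \<longleftrightarrow> (\<forall>u v. g (u + v) = g u + g v) \<and> (\<forall>a u. g (s1 a u) = s2 a (g u))"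

definition bilinear_form :: "(('b,'k::field) vec \<Rightarrow> ('b,'k) vec \<Rightarrow> 'k) \<Rightarrow> bool" where
  "bilinear_form F \<longleftrightarrow> (\<forall>y. lin_map vsmult (*) (\<lambda>x. F x y)) \<and> (\<forall>x. lin_map vsmult (*) (F x))"

definition tone :: "('b,'k::field) tens" where
  "tone = Poly_Mapping.single [] 1"

definition tprod :: "('b,'k::field) tens \<Rightarrow> ('b,'k) tens \<Rightarrow> ('b,'k) tens" where
  "tprod s t = (\<Sum>u\<in>Poly_Mapping.keys s. \<Sum>w\<in>Poly_Mapping.keys t. Poly_Mapping.single (u @ w) (Poly_Mapping.lookup s u * Poly_Mapping.lookup t w))"

definition emb :: "('b,'k::field) vec \<Rightarrow> ('b,'k) tens" where
  "emb x = (\<Sum>b\<in>Poly_Mapping.keys x. Poly_Mapping.single [b] (Poly_Mapping.lookup x b))"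

definition tens_list :: "('b,'k::field) vec list \<Rightarrow> ('b,'k) tens" where
  "tens_list xs = foldr (\<lambda>x t. tprod (emb x) t) xs tone"

definition iop :: "(('b,'k::field) vec \<Rightarrow> 'k) \<Rightarrow> ('b,'k) tens \<Rightarrow> ('b,'k) tens" where
  "iop f = (THE g. lin_map vsmult vsmult g \<and> g tone = 0 \<and>
      (\<forall>x u. g (tprod (emb x) u) = vsmult (f x) u - tprod (emb x) (g u)))"

definition iF :: "(('b,'k::field) vec \<Rightarrow> ('b,'k) vec \<Rightarrow> 'k) \<Rightarrow> ('b,'k) vec \<Rightarrow> ('b,'k) tens \<Rightarrow> ('b,'k) tens" where
  "iF F x = iop (\<lambda>y. F x y)"

definition LambdaF :: "(('b,'k::field) vec \<Rightarrow> ('b,'k) vec \<Rightarrow> 'k) \<Rightarrow> ('b,'k) tens \<Rightarrow> ('b,'k) tens \<Rightarrow> ('b,'k) tens" where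
  "LambdaF F = (THE L. (\<forall>u. lin_map vsmult vsmult (L u)) \<and>
      (\<forall>s t u. L (s + t) u = L s u + L t u) \<and> (\<forall>a s u. L (vsmult a s) u = vsmult a (L s u)) \<and>
      L tone = id \<and> (\<forall>s t. L (tprod s t) = L s \<circ> L t) \<and>
      (\<forall>x u. L (emb x) u = tprod (emb x) u + iF F x u))"

definition lambdaF :: "(('b,'k::field) vec \<Rightarrow> ('b,'k) vec \<Rightarrow> 'k) \<Rightarrow> ('b,'k) tens \<Rightarrow> ('b,'k) tens" where
  "lambdaF F u = LambdaF F u tone"

text \<open>Index tuples (i1,j1,...,ik,jk), as lists of pairs.\<close>
definition pair_seq :: "(nat \<times> nat) list \<Rightarrow> nat list" where
  "pair_seq ps = concat (List.map (\<lambda>(i,j). [i,j]) ps)"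

definition pairings :: "nat \<Rightarrow> nat \<Rightarrow> (nat \<times> nat) list set" where
  "pairings p k = {ps. length ps = k \<and> distinct (pair_seq ps) \<and>
      (\<forall>(i,j)\<in>set ps. 1 \<le> i \<and> i < j \<and> j \<le> p) \<and> sorted_wrt (<) (List.map fst ps)}"

definition pair_perm :: "nat \<Rightarrow> (nat \<times> nat) list \<Rightarrow> nat \<Rightarrow> nat" where
  "pair_perm p ps = (\<lambda>l. if 1 \<le> l \<and> l \<le> p
      then (pair_seq ps @ filter (\<lambda>m. m \<notin> set (pair_seq ps)) [1..<p+1]) ! (l - 1) else l)"

end

theory Submission
  imports Defs
begin

abbreviation lk where "lk \<equiv> Poly_Mapping.lookup"
abbreviation sg where "sg \<equiv> Poly_Mapping.single"
abbreviation ks where "ks \<equiv> Poly_Mapping.keys"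

lemma lookup_vsmult[simp]: "lk (vsmult a v) k = a * lk v k"
  by (simp add: vsmult_def map.rep_eq when_def)

lemma vsmult_add_right: "vsmult a (u + v) = vsmult a u + vsmult a v"
  by (rule poly_mapping_eqI) (simp add: lookup_add algebra_simps)
lemma vsmult_add_left: "vsmult (a + b) v = vsmult a v + vsmult b v"
  by (rule poly_mapping_eqI) (simp add: lookup_add algebra_simps)
lemma vsmult_diff_right: "vsmult a (u - v) = vsmult a u - vsmult a v"
  by (rule poly_mapping_eqI) (simp add: lookup_minus algebra_simps)
lemma vsmult_diff_left: "vsmult (a - b) v = vsmult a v - vsmult b v"
  by (rule poly_mapping_eqI) (simp add: lookup_minus algebra_simps)
lemma vsmult_vsmult[simp]: "vsmult a (vsmult b v) = vsmult (a * b) v"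
  by (rule poly_mapping_eqI) (simp add: algebra_simps)
lemma vsmult_one[simp]: "vsmult 1 v = v"
  by (rule poly_mapping_eqI) simp
lemma vsmult_zero_left[simp]: "vsmult 0 v = 0"
  by (rule poly_mapping_eqI) simp
lemma vsmult_zero_right[simp]: "vsmult a 0 = 0"
  by (rule poly_mapping_eqI) simp
lemma vsmult_single: "vsmult a (sg k c) = sg k (a * c)"
  by (rule poly_mapping_eqI) (simp add: lookup_single when_def)
lemma vsmult_sum_right: "vsmult a (sum f A) = (\<Sum>i\<in>A. vsmult a (f i))"
  by (rule poly_mapping_eqI) (simp add: lookup_sum sum_distrib_left)
lemma vsmult_sum_left: "vsmult (sum f A) v = (\<Sum>i\<in>A. vsmult (f i) v)"
  by (rule poly_mapping_eqI) (simp add: lookup_sum sum_distrib_right)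
lemma vsmult_minus_left: "vsmult (- a) v = - vsmult a v"
  by (rule poly_mapping_eqI) simp
lemma keys_vsmult: "ks (vsmult a v) \<subseteq> ks v"
  by (auto simp: in_keys_iff)

definition lext :: "('a \<Rightarrow> ('c \<Rightarrow>\<^sub>0 'k::field)) \<Rightarrow> ('a \<Rightarrow>\<^sub>0 'k) \<Rightarrow> ('c \<Rightarrow>\<^sub>0 'k)" where
  "lext H s = (\<Sum>u\<in>ks s. vsmult (lk s u) (H u))"

lemma lext_superset: "finite A \<Longrightarrow> ks s \<subseteq> A \<Longrightarrow> lext H s = (\<Sum>u\<in>A. vsmult (lk s u) (H u))"
  unfolding lext_def by (rule sum.mono_neutral_left) (auto simp: in_keys_iff)

lemma lext_add: "lext H (s + t) = lext H s + lext H t"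
proof -
  let ?A = "ks s \<union> ks t"
  have f: "finite ?A" by simp
  have "ks (s + t) \<subseteq> ?A" by (rule keys_add)
  then show ?thesis
    using lext_superset[OF f, of "s+t" H] lext_superset[OF f, of s H] lext_superset[OF f, of t H]
    by (simp add: lookup_add vsmult_add_left sum.distrib)
qed

lemma lext_smult: "lext H (vsmult a s) = vsmult a (lext H s)"
  using lext_superset[of "ks s" "vsmult a s" H] keys_vsmult[of a s]
  by (simp add: lext_def vsmult_sum_right)

lemma lext_single: "lext H (sg u c) = vsmult c (H u)"
  using lext_superset[of "{u}" "sg u c" H] by simp

lemma lext_zero[simp]: "lext H 0 = 0"
  by (simp add: lext_def)

lemma lext_id: "lext (\<lambda>u. sg u 1) s = s"
proof (rule poly_mapping_eqI)
  fix k
  have "(\<Sum>x\<in>ks s. lk s x * (if x = k then 1 else 0)) = (\<Sum>x\<in>ks s. if x = k then lk s k else 0)"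
    by (rule sum.cong) auto
  then show "lk (lext (\<lambda>u. sg u 1) s) k = lk s k"
    by (simp add: lext_def lookup_sum lookup_single when_def in_keys_iff)
qed

lemma lext_cong: "(\<And>u. u \<in> ks s \<Longrightarrow> H u = H' u) \<Longrightarrow> lext H s = lext H' s"
  by (simp add: lext_def)

lemma lext_fun_add: "lext (\<lambda>u. H u + H' u) s = lext H s + lext H' s"
  by (simp add: lext_def vsmult_add_right sum.distrib)
lemma lext_fun_diff: "lext (\<lambda>u. H u - H' u) s = lext H s - lext H' s"
  by (simp add: lext_def vsmult_diff_right sum_subtractf)
lemma lext_fun_smult: "lext (\<lambda>u. vsmult (a u) (H u)) s = lext (\<lambda>u. vsmult (a u) (H u)) s"
  by simp
lemma lext_fun_smult_const: "lext (\<lambda>u. vsmult a (H u)) s = vsmult a (lext H s)"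
  by (simp add: lext_def vsmult_sum_right mult.commute)
lemma lext_fun_zero[simp]: "lext (\<lambda>u. 0) s = 0"
  by (simp add: lext_def)

lemma lext_sum: "lext H (sum f A) = (\<Sum>i\<in>A. lext H (f i))"
  by (induction A rule: infinite_finite_induct) (simp_all add: lext_add)

lemma lext_fun_sum: "lext (\<lambda>u. \<Sum>i\<in>A. H i u) s = (\<Sum>i\<in>A. lext (H i) s)"
  by (induction A rule: infinite_finite_induct) (simp_all add: lext_fun_add)

lemma lext_swap: "lext (\<lambda>u. lext (\<lambda>w. H u w) t) s = lext (\<lambda>w. lext (\<lambda>u. H u w) s) t"
  unfolding lext_def vsmult_sum_right by (subst sum.swap) (simp add: mult.commute)

lemma lin_map_zero:
  fixes g :: "'a::monoid_add \<Rightarrow> 'b::cancel_comm_monoid_add"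
  assumes "lin_map s1 s2 g" shows "g 0 = 0"
proof -
  have "g (0 + 0) = g 0 + g 0" using assms unfolding lin_map_def by blast
  then show ?thesis by simp
qed

lemma lin_map_sum:
  fixes g :: "'a::comm_monoid_add \<Rightarrow> 'b::cancel_comm_monoid_add"
  assumes "lin_map s1 s2 g" shows "g (sum f A) = (\<Sum>i\<in>A. g (f i))"
proof (induction A rule: infinite_finite_induct)
  case (infinite A) then show ?case using lin_map_zero[OF assms] by simp
next
  case empty then show ?case using lin_map_zero[OF assms] by simp
next
  case (insert x F) then show ?case using assms by (simp add: lin_map_def)
qed

lemma lin_lext_comm:
  assumes "lin_map vsmult vsmult g" shows "g (lext H s) = lext (\<lambda>u. g (H u)) s"
  unfolding lext_def lin_map_sum[OF assms] using assms by (simp add: lin_map_def)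

lemma lin_scalar:
  assumes "lin_map vsmult (*) f" shows "f (lext H s) = (\<Sum>u\<in>ks s. lk s u * f (H u))"
  unfolding lext_def lin_map_sum[OF assms] using assms by (simp add: lin_map_def)

lemma lin_lext: "lin_map vsmult vsmult (lext H)"
  by (simp add: lin_map_def lext_add lext_smult)

lemma lin_unique: "lin_map vsmult vsmult g \<Longrightarrow> g s = lext (\<lambda>w. g (sg w 1)) s"
  using lin_lext_comm[of g "\<lambda>u. sg u 1" s] by (simp add: lext_id)

lemma lin_eqI: "lin_map vsmult vsmult g1 \<Longrightarrow> lin_map vsmult vsmult g2 \<Longrightarrow> (\<And>w. g1 (sg w 1) = g2 (sg w 1)) \<Longrightarrow> g1 s = g2 s"
  using lin_unique[of g1 s] lin_unique[of g2 s] by simp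

lemma lin_comp: "lin_map vsmult vsmult g1 \<Longrightarrow> lin_map vsmult vsmult g2 \<Longrightarrow> lin_map vsmult vsmult (\<lambda>u. g1 (g2 u))"
  by (simp add: lin_map_def)
lemma lin_plus: "lin_map vsmult vsmult g1 \<Longrightarrow> lin_map vsmult vsmult g2 \<Longrightarrow> lin_map vsmult vsmult (\<lambda>u. g1 u + g2 u)"
  by (simp add: lin_map_def vsmult_add_right)
lemma lin_id: "lin_map vsmult vsmult (\<lambda>u. u)"
  by (simp add: lin_map_def)

lemma tprod_lext: "tprod s t = lext (\<lambda>u. lext (\<lambda>w. sg (u @ w) 1) t) s"
  by (simp add: tprod_def lext_def vsmult_sum_right vsmult_single mult.commute)

lemma lin_tprod_left: "lin_map vsmult vsmult (\<lambda>s. tprod s t)"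
  unfolding tprod_lext by (rule lin_lext)
lemma lin_tprod_right: "lin_map vsmult vsmult (tprod s)"
  unfolding tprod_lext lin_map_def
  by (simp add: lext_add lext_fun_add lext_smult lext_fun_smult_const)

lemma tprod_single: "tprod (sg u a) (sg w b) = sg (u @ w) (a * b)"
  by (simp add: tprod_lext lext_single vsmult_single)

lemma tprod_add_left: "tprod (s + s') t = tprod s t + tprod s' t"
  using lin_tprod_left unfolding lin_map_def by blast
lemma tprod_add_right: "tprod s (t + t') = tprod s t + tprod s t'"
  using lin_tprod_right unfolding lin_map_def by blast
lemma tprod_smult_left: "tprod (vsmult a s) t = vsmult a (tprod s t)"
  using lin_tprod_left unfolding lin_map_def by blast
lemma tprod_smult_right: "tprod s (vsmult a t) = vsmult a (tprod s t)"
  using lin_tprod_right unfolding lin_map_def by blast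
lemma tprod_sum_right: "tprod s (sum f A) = (\<Sum>i\<in>A. tprod s (f i))"
  by (rule lin_map_sum[OF lin_tprod_right])
lemma tprod_zero_right[simp]: "tprod s 0 = 0"
  by (rule lin_map_zero[OF lin_tprod_right])
lemma tprod_diff_right: "tprod s (t - t') = tprod s t - tprod s t'"
  using tprod_add_right[of s "t - t'" t'] by (simp add: algebra_simps)

lemma emb_lext: "emb x = lext (\<lambda>b. sg [b] 1) x"
  by (simp add: emb_def lext_def vsmult_single)

lemma emb_single: "emb (sg b 1) = sg [b] 1"
  by (simp add: emb_lext lext_single)

lemma tone_single: "tone = sg [] 1"
  by (simp add: tone_def)

lemma tens_list_Cons: "tens_list (x # xs) = tprod (emb x) (tens_list xs)"
  by (simp add: tens_list_def)
lemma tens_list_Nil: "tens_list [] = tone"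
  by (simp add: tens_list_def)

lemma single_Cons: "sg (b # w) 1 = tprod (emb (sg b 1)) (sg w 1)"
  by (simp add: emb_single tprod_single)


primrec iw :: "(('b,'k::field) vec \<Rightarrow> 'k) \<Rightarrow> 'b list \<Rightarrow> ('b,'k) tens" where
  "iw f [] = 0"
| "iw f (b # w) = vsmult (f (sg b 1)) (sg w 1) - tprod (sg [b] 1) (iw f w)"

definition ispec :: "(('b,'k::field) vec \<Rightarrow> 'k) \<Rightarrow> (('b,'k) tens \<Rightarrow> ('b,'k) tens) \<Rightarrow> bool" where
  "ispec f g \<longleftrightarrow> lin_map vsmult vsmult g \<and> g tone = 0 \<and>
      (\<forall>x u. g (tprod (emb x) u) = vsmult (f x) u - tprod (emb x) (g u))"

lemma ispec_uniq:
  assumes "ispec f g" shows "g u = lext (iw f) u"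
proof -
  have "g (sg w 1) = iw f w" for w
  proof (induction w)
    case Nil then show ?case using assms by (simp add: ispec_def tone_single)
  next
    case (Cons b w)
    have "g (sg (b # w) 1) = vsmult (f (sg b 1)) (sg w 1) - tprod (emb (sg b 1)) (g (sg w 1))"
      using assms unfolding ispec_def single_Cons by blast
    then show ?case using Cons by (simp add: emb_single)
  qed
  then show ?thesis using lin_unique[of g u] assms by (simp add: ispec_def)
qed

lemma tprod_emb_left: "tprod (emb x) t = lext (\<lambda>b. tprod (sg [b] 1) t) x"
  unfolding emb_lext by (rule lin_lext_comm[OF lin_tprod_left])

lemma ispec_ex:
  assumes f: "lin_map vsmult (*) f" shows "ispec f (lext (iw f))"
  unfolding ispec_def
proof (intro conjI allI)
  show "lin_map vsmult vsmult (lext (iw f))" by (rule lin_lext)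
  show "lext (iw f) tone = 0" by (simp add: tone_single lext_single)
  fix x u
  let ?g1 = "\<lambda>u. lext (iw f) (tprod (emb x) u)"
  let ?g2 = "\<lambda>u. vsmult (f x) u - tprod (emb x) (lext (iw f) u)"
  have l1: "lin_map vsmult vsmult ?g1"
    by (rule lin_comp[OF lin_lext lin_tprod_right])
  have l2: "lin_map vsmult vsmult ?g2"
    unfolding lin_map_def
    by (simp add: vsmult_add_right tprod_add_right lext_add lext_smult tprod_smult_right
        vsmult_diff_right mult.commute)
  have fx: "f x = (\<Sum>b\<in>ks x. lk x b * f (sg b 1))"
    using lin_scalar[OF f, of "\<lambda>b. sg b 1" x] by (simp add: lext_id)
  have "?g1 (sg w 1) = ?g2 (sg w 1)" for w
  proof -
    have "?g1 (sg w 1) = lext (iw f) (lext (\<lambda>b. sg (b # w) 1) x)"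
      by (simp add: tprod_emb_left tprod_single)
    also have "\<dots> = lext (\<lambda>b. iw f (b # w)) x"
      by (simp add: lin_lext_comm[OF lin_lext] lext_single)
    also have "\<dots> = lext (\<lambda>b. vsmult (f (sg b 1)) (sg w 1)) x - lext (\<lambda>b. tprod (sg [b] 1) (iw f w)) x"
      by (simp add: lext_fun_diff)
    also have "lext (\<lambda>b. vsmult (f (sg b 1)) (sg w 1)) x = vsmult (f x) (sg w 1)"
      by (simp add: fx lext_def vsmult_sum_left)
    also have "lext (\<lambda>b. tprod (sg [b] 1) (iw f w)) x = tprod (emb x) (lext (iw f) (sg w 1))"
      by (simp add: tprod_emb_left lext_single)
    finally show ?thesis .
  qed
  then show "?g1 u = ?g2 u" by (rule lin_eqI[OF l1 l2])
qed

lemma iop_eq: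
  assumes f: "lin_map vsmult (*) f" shows "iop f = lext (iw f)"
proof -
  have "iop f = (THE g. ispec f g)" by (simp add: iop_def ispec_def)
  also have "\<dots> = lext (iw f)"
    by (rule the_equality[where P="ispec f"], rule ispec_ex[OF f], rule ext, erule ispec_uniq)
  finally show ?thesis .
qed

lemma iop_spec: "lin_map vsmult (*) f \<Longrightarrow> ispec f (iop f)"
  using iop_eq ispec_ex by metis

lemma bil_right: "bilinear_form F \<Longrightarrow> lin_map vsmult (*) (F x)"
  by (simp add: bilinear_form_def)
lemma bil_left: "bilinear_form F \<Longrightarrow> lin_map vsmult (*) (\<lambda>x. F x y)"
  by (simp add: bilinear_form_def)

definition Lb :: "(('b,'k::field) vec \<Rightarrow> ('b,'k) vec \<Rightarrow> 'k) \<Rightarrow> 'b \<Rightarrow> ('b,'k) tens \<Rightarrow> ('b,'k) tens" where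
  "Lb F b u = tprod (sg [b] 1) u + iop (F (sg b 1)) u"

primrec Lw :: "(('b,'k::field) vec \<Rightarrow> ('b,'k) vec \<Rightarrow> 'k) \<Rightarrow> 'b list \<Rightarrow> ('b,'k) tens \<Rightarrow> ('b,'k) tens" where
  "Lw F [] u = u"
| "Lw F (b # w) u = Lb F b (Lw F w u)"

definition L0 :: "(('b,'k::field) vec \<Rightarrow> ('b,'k) vec \<Rightarrow> 'k) \<Rightarrow> ('b,'k) tens \<Rightarrow> ('b,'k) tens \<Rightarrow> ('b,'k) tens" where
  "L0 F s u = lext (\<lambda>w. Lw F w u) s"

definition Lspec :: "(('b,'k::field) vec \<Rightarrow> ('b,'k) vec \<Rightarrow> 'k) \<Rightarrow> (('b,'k) tens \<Rightarrow> ('b,'k) tens \<Rightarrow> ('b,'k) tens) \<Rightarrow> bool" where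
  "Lspec F L \<longleftrightarrow> (\<forall>u. lin_map vsmult vsmult (L u)) \<and>
      (\<forall>s t u. L (s + t) u = L s u + L t u) \<and> (\<forall>a s u. L (vsmult a s) u = vsmult a (L s u)) \<and>
      L tone = id \<and> (\<forall>s t. L (tprod s t) = L s \<circ> L t) \<and>
      (\<forall>x u. L (emb x) u = tprod (emb x) u + iF F x u)"

lemma lin_Lb: assumes F: "bilinear_form F" shows "lin_map vsmult vsmult (Lb F b)"
  unfolding Lb_def
proof (rule lin_plus[OF lin_tprod_right])
  have "ispec (F (sg b 1)) (iop (F (sg b 1)))" by (rule iop_spec[OF bil_right[OF F]])
  then show "lin_map vsmult vsmult (iop (F (sg b 1)))" unfolding ispec_def by blast
qed

lemma lin_Lw: assumes F: "bilinear_form F" shows "lin_map vsmult vsmult (Lw F w)"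
proof (induction w)
  case Nil
  have "Lw F [] = (\<lambda>u. u)" by (simp add: fun_eq_iff)
  then show ?case using lin_id by simp
next
  case (Cons a w)
  have "Lw F (a # w) = (\<lambda>u. Lb F a (Lw F w u))" by (simp add: fun_eq_iff)
  then show ?case using lin_comp[OF lin_Lb[OF F] Cons] by simp
qed

lemma Lw_append: "Lw F (u @ w) v = Lw F u (Lw F w v)"
  by (induction u) simp_all

lemma iw_left_lin:
  assumes F: "bilinear_form F" shows "iw (F x) w = lext (\<lambda>b. iw (F (sg b 1)) w) x"
proof (induction w)
  case Nil then show ?case by simp
next
  case (Cons c w)
  have Fx: "F x (sg c 1) = (\<Sum>b\<in>ks x. lk x b * F (sg b 1) (sg c 1))"
    using lin_scalar[OF bil_left[OF F], of "\<lambda>b. sg b 1" x] by (simp add: lext_id)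
  have "lext (\<lambda>b. iw (F (sg b 1)) (c # w)) x =
      lext (\<lambda>b. vsmult (F (sg b 1) (sg c 1)) (sg w 1)) x - lext (\<lambda>b. tprod (sg [c] 1) (iw (F (sg b 1)) w)) x"
    by (simp add: lext_fun_diff)
  also have "lext (\<lambda>b. vsmult (F (sg b 1) (sg c 1)) (sg w 1)) x = vsmult (F x (sg c 1)) (sg w 1)"
    by (simp add: Fx lext_def vsmult_sum_left)
  also have "lext (\<lambda>b. tprod (sg [c] 1) (iw (F (sg b 1)) w)) x = tprod (sg [c] 1) (iw (F x) w)"
    using lin_lext_comm[OF lin_tprod_right, of "sg [c] 1" "\<lambda>b. iw (F (sg b 1)) w" x] Cons by simp
  finally show ?case by simp
qed

lemma Lspec_ex:
  assumes F: "bilinear_form F" shows "Lspec F (L0 F)"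
  unfolding Lspec_def
proof (intro conjI allI)
  fix u
  show "lin_map vsmult vsmult (L0 F u)"
    using lin_Lw[OF F] unfolding lin_map_def L0_def
    by (simp add: lext_fun_add lext_fun_smult_const)
next
  fix s t u show "L0 F (s + t) u = L0 F s u + L0 F t u" by (simp add: L0_def lext_add)
next
  fix a s u show "L0 F (vsmult a s) u = vsmult a (L0 F s u)" by (simp add: L0_def lext_smult)
next
  show "L0 F tone = id" by (simp add: L0_def fun_eq_iff tone_single lext_single)
next
  fix s t
  show "L0 F (tprod s t) = L0 F s \<circ> L0 F t"
  proof
    fix v
    have "L0 F (tprod s t) v = lext (\<lambda>u. lext (\<lambda>w. Lw F (u @ w) v) t) s"
      unfolding L0_def tprod_lext
      by (simp add: lin_lext_comm[OF lin_lext] lext_single)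
    also have "\<dots> = lext (\<lambda>u. lext (\<lambda>w. Lw F u (Lw F w v)) t) s"
      by (simp add: Lw_append)
    also have "\<dots> = (L0 F s \<circ> L0 F t) v"
      unfolding L0_def comp_def
      by (simp add: lin_lext_comm[OF lin_Lw[OF F]])
    finally show "L0 F (tprod s t) v = (L0 F s \<circ> L0 F t) v" .
  qed
next
  fix x u
  have "L0 F (emb x) u = lext (\<lambda>b. Lb F b u) x"
    unfolding L0_def emb_lext by (simp add: lin_lext_comm[OF lin_lext] lext_single)
  also have "\<dots> = lext (\<lambda>b. tprod (sg [b] 1) u) x + lext (\<lambda>b. iop (F (sg b 1)) u) x"
    by (simp add: Lb_def lext_fun_add)
  also have "lext (\<lambda>b. tprod (sg [b] 1) u) x = tprod (emb x) u"
    by (simp add: tprod_emb_left)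
  also have "lext (\<lambda>b. iop (F (sg b 1)) u) x = lext (\<lambda>b. lext (\<lambda>w. iw (F (sg b 1)) w) u) x"
    by (simp add: iop_eq[OF bil_right[OF F]])
  also have "\<dots> = lext (\<lambda>w. lext (\<lambda>b. iw (F (sg b 1)) w) x) u"
    by (rule lext_swap)
  also have "\<dots> = iF F x u"
    by (simp add: iF_def iop_eq[OF bil_right[OF F]] iw_left_lin[OF F, symmetric])
  finally show "L0 F (emb x) u = tprod (emb x) u + iF F x u" .
qed

lemma Lspec_uniq:
  assumes F: "bilinear_form F" and L: "Lspec F L" shows "L = L0 F"
proof (intro ext)
  fix s u
  have "L (sg w 1) = Lw F w" for w
  proof (induction w)
    case Nil then show ?case using L by (simp add: Lspec_def tone_single[symmetric] fun_eq_iff)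
  next
    case (Cons b w)
    have "L (sg (b # w) 1) = L (emb (sg b 1)) \<circ> L (sg w 1)"
      using L unfolding Lspec_def single_Cons by blast
    moreover have "L (emb (sg b 1)) v = Lb F b v" for v
    proof -
      have "L (emb (sg b 1)) v = tprod (emb (sg b 1)) v + iF F (sg b 1) v"
        using L unfolding Lspec_def by blast
      then show ?thesis by (simp add: Lb_def emb_single iF_def)
    qed
    ultimately show ?case using Cons by (simp add: fun_eq_iff)
  qed
  moreover have "lin_map vsmult vsmult (\<lambda>s. L s u)"
    using L by (simp add: Lspec_def lin_map_def)
  ultimately show "L s u = L0 F s u"
    using lin_unique[of "\<lambda>s. L s u" s] by (simp add: L0_def)
qed

lemma LambdaF_spec:
  assumes F: "bilinear_form F" shows "Lspec F (LambdaF F)"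
proof -
  have "LambdaF F = (THE L. Lspec F L)" by (simp add: LambdaF_def Lspec_def)
  also have "\<dots> = L0 F"
    by (rule the_equality[where P="Lspec F"], rule Lspec_ex[OF F], erule Lspec_uniq[OF F])
  finally show ?thesis using Lspec_ex[OF F] by simp
qed

lemma lambdaF_Nil: assumes F: "bilinear_form F" shows "lambdaF F (tens_list []) = tone"
  using LambdaF_spec[OF F] by (simp add: lambdaF_def tens_list_Nil Lspec_def)

lemma lambdaF_Cons: assumes F: "bilinear_form F" shows
   "lambdaF F (tens_list (x # xs)) = tprod (emb x) (lambdaF F (tens_list xs)) + iop (F x) (lambdaF F (tens_list xs))"
  using LambdaF_spec[OF F] by (simp add: lambdaF_def tens_list_Cons Lspec_def iF_def)

fun ninv :: "nat list \<Rightarrow> nat" where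
  "ninv [] = 0"
| "ninv (a # xs) = length (filter (\<lambda>b. b < a) xs) + ninv xs"

lemma ninv_swap: "b < a \<Longrightarrow> ninv (xs @ a # b # ys) = Suc (ninv (xs @ b # a # ys))"
  by (induction xs) auto

lemma ninv_move: "a \<notin> set xs \<Longrightarrow> even (ninv (xs @ a # ys) + length xs + ninv (a # xs @ ys))"
proof (induction xs)
  case Nil then show ?case by simp
next
  case (Cons x xs)
  then have ax: "a \<noteq> x" and IH: "even (ninv (xs @ a # ys) + length xs + ninv (a # xs @ ys))" by auto
  show ?case using IH ax by (cases "a < x") auto
qed

lemma even_pow: "even (A + B + C) \<Longrightarrow> (-1::int) ^ A = (-1) ^ C * (-1) ^ B"
  by (simp add: minus_one_power_iff) presburger

lemma ninv_move_sign: "a \<notin> set xs \<Longrightarrow> (-1::int) ^ ninv (xs @ a # ys) = (-1) ^ ninv (a # xs @ ys) * (-1) ^ length xs"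
  using even_pow[OF ninv_move] by blast

lemma ninv_map_Suc: "ninv (map Suc xs) = ninv xs"
  by (induction xs) (simp_all add: filter_map comp_def)

lemma ninv_one_Suc: "ninv (Suc 0 # map Suc xs) = ninv xs"
  by (simp add: ninv_map_Suc filter_map comp_def)

lemma sorted_ninv: "sorted xs \<Longrightarrow> ninv xs = 0"
  by (induction xs) (auto simp: filter_empty_conv)

lemma not_sorted_descent: "\<not> sorted s \<Longrightarrow> \<exists>xs a b ys. s = xs @ a # b # ys \<and> b < a"
proof (induction s)
  case Nil then show ?case by simp
next
  case (Cons x s)
  show ?case
  proof (cases "sorted s")
    case False
    then obtain xs a b ys where "s = xs @ a # b # ys" "b < a" using Cons by blast
    then show ?thesis by (intro exI[of _ "x # xs"]) auto
  next
    case True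
    then obtain c where c: "c \<in> set s" "c < x" using Cons.prems by (auto simp: not_le)
    then obtain h t where s: "s = h # t" by (cases s) auto
    have "h \<le> c" using True c s by auto
    then show ?thesis using s c by (intro exI[of _ "[]"]) auto
  qed
qed

definition perm_of_list :: "nat \<Rightarrow> nat list \<Rightarrow> nat \<Rightarrow> nat" where
  "perm_of_list n s = (\<lambda>l. if 1 \<le> l \<and> l \<le> n then s ! (l - 1) else l)"

lemma perm_of_list_permutes:
  assumes d: "distinct s" and st: "set s = {1..n}"
  shows "perm_of_list n s permutes {1..n}"
proof (rule bij_imp_permutes)
  have len: "length s = n" using distinct_card[OF d] st by simp
  show "bij_betw (perm_of_list n s) {1..n} {1..n}"
  proof (rule bij_betw_imageI)
    show "inj_on (perm_of_list n s) {1..n}"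
    proof (rule inj_onI)
      fix l l' assume "l \<in> {1..n}" "l' \<in> {1..n}" "perm_of_list n s l = perm_of_list n s l'"
      then have "s ! (l - 1) = s ! (l' - 1)" "l - 1 < length s" "l' - 1 < length s"
        using len by (auto simp: perm_of_list_def)
      then have "l - 1 = l' - 1" using nth_eq_iff_index_eq[OF d] by blast
      then show "l = l'" using \<open>l \<in> {1..n}\<close> \<open>l' \<in> {1..n}\<close> by auto
    qed
    show "perm_of_list n s ` {1..n} = {1..n}"
    proof
      show "perm_of_list n s ` {1..n} \<subseteq> {1..n}"
      proof
        fix y assume "y \<in> perm_of_list n s ` {1..n}"
        then obtain l where l: "l \<in> {1..n}" "y = s ! (l - 1)" by (auto simp: perm_of_list_def)
        then have "l - 1 < length s" using len by auto
        then have "s ! (l - 1) \<in> set s" by (rule nth_mem)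
        then show "y \<in> {1..n}" using l st by simp
      qed
      show "{1..n} \<subseteq> perm_of_list n s ` {1..n}"
      proof
        fix y assume "y \<in> {1..n}"
        then obtain k where k: "k < length s" "s ! k = y" using st by (metis in_set_conv_nth)
        then have "perm_of_list n s (Suc k) = y" using len by (simp add: perm_of_list_def)
        moreover have "Suc k \<in> {1..n}" using k len by auto
        ultimately show "y \<in> perm_of_list n s ` {1..n}" by force
      qed
    qed
  qed
  show "\<And>x. x \<notin> {1..n} \<Longrightarrow> perm_of_list n s x = x" by (auto simp: perm_of_list_def)
qed

lemma perm_of_list_permutation: "distinct s \<Longrightarrow> set s = {1..n} \<Longrightarrow> permutation (perm_of_list n s)"
  using perm_of_list_permutes permutes_imp_permutation by blast

lemma sign_perm_of_list:
  "distinct s \<Longrightarrow> set s = {1..n} \<Longrightarrow> sign (perm_of_list n s) = (-1) ^ ninv s"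
proof (induction "ninv s" arbitrary: s rule: less_induct)
  case less
  have len: "length s = n" using distinct_card[OF less.prems(1)] less.prems(2) by simp
  show ?case
  proof (cases "sorted s")
    case True
    have "s = [1..<n+1]"
    proof (rule sorted_distinct_set_unique[OF True less.prems(1)])
      have "set [1..<n+1] = {1..n}" by (simp only: set_upt Suc_eq_plus1[symmetric] atLeastLessThanSuc_atLeastAtMost)
      then show "set s = set [1..<n+1]" using less.prems(2) by simp
    qed (simp_all del: upt_Suc)
    then have "perm_of_list n s = id" by (auto simp: perm_of_list_def fun_eq_iff simp del: upt_Suc)
    then show ?thesis using sorted_ninv[OF True] by simp
  next
    case False
    then obtain xs a b ys where s: "s = xs @ a # b # ys" and ba: "b < a" using not_sorted_descent by blast
    define s' where "s' = xs @ b # a # ys"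
    have inv: "ninv s = Suc (ninv s')" using ninv_swap[OF ba] s s'_def by simp
    have d': "distinct s'" "set s' = {1..n}" using less.prems s s'_def by auto
    have IH: "sign (perm_of_list n s') = (-1) ^ ninv s'" using less.hyps[of s'] inv d' by simp
    let ?i = "length xs"
    have lt: "Suc (Suc ?i) \<le> n" using len s by simp
    have eq: "perm_of_list n s = perm_of_list n s' \<circ> transpose (Suc ?i) (Suc (Suc ?i))"
    proof
      fix l
      show "perm_of_list n s l = (perm_of_list n s' \<circ> transpose (Suc ?i) (Suc (Suc ?i))) l"
        using lt unfolding s s'_def perm_of_list_def
        by (cases "l < Suc ?i"; cases "l = Suc ?i"; cases "l = Suc (Suc ?i)")
           (auto simp: nth_append transpose_def nth_Cons' split: if_splits)
    qed
    have "sign (perm_of_list n s) = sign (perm_of_list n s') * sign (transpose (Suc ?i) (Suc (Suc ?i)))"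
      unfolding eq
      by (rule sign_compose[OF perm_of_list_permutation[OF d']])
         (simp add: permutation_swap_id)
    then show ?thesis using IH inv by (simp add: sign_swap_id)
  qed
qed

lemma iop_tens_list:
  assumes f: "lin_map vsmult (*) f"
  shows "iop f (tens_list ys) = (\<Sum>m<length ys. vsmult ((-1) ^ m * f (ys ! m)) (tens_list (take m ys @ drop (Suc m) ys)))"
proof (induction ys)
  case Nil then show ?case using iop_spec[OF f] by (simp add: ispec_def tens_list_Nil)
next
  case (Cons y ys)
  have sp: "iop f (tens_list (y # ys)) = vsmult (f y) (tens_list ys) - tprod (emb y) (iop f (tens_list ys))"
    using iop_spec[OF f] unfolding ispec_def tens_list_Cons by blast
  have "tprod (emb y) (iop f (tens_list ys)) =
     (\<Sum>m<length ys. vsmult ((-1) ^ m * f (ys ! m)) (tens_list (y # take m ys @ drop (Suc m) ys)))"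
    by (simp add: Cons tprod_sum_right tprod_smult_right tens_list_Cons)
  then have "iop f (tens_list (y # ys)) = vsmult (f y) (tens_list ys) +
     (\<Sum>m<length ys. vsmult ((-1) ^ Suc m * f (ys ! m)) (tens_list (y # take m ys @ drop (Suc m) ys)))"
    by (simp add: sp sum_negf[symmetric] vsmult_minus_left[symmetric])
  then show ?case by (simp add: sum.lessThan_Suc_shift del: sum.lessThan_Suc)
qed

lemma pair_seq_Nil[simp]: "pair_seq [] = []"
  by (simp add: pair_seq_def)
lemma pair_seq_Cons[simp]: "pair_seq (p # ps) = fst p # snd p # pair_seq ps"
  by (simp add: pair_seq_def split_beta)
lemma set_pair_seq: "set (pair_seq ps) = fst ` set ps \<union> snd ` set ps"
  by (induction ps) auto
lemma length_pair_seq: "length (pair_seq ps) = 2 * length ps"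
  by (induction ps) auto

definition AP :: "nat \<Rightarrow> (nat \<times> nat) list set" where
  "AP n = {ps. distinct (pair_seq ps) \<and> (\<forall>(i,j)\<in>set ps. 1 \<le> i \<and> i < j \<and> j \<le> n) \<and> sorted_wrt (<) (List.map fst ps)}"

definition rest :: "nat \<Rightarrow> (nat \<times> nat) list \<Rightarrow> nat list" where
  "rest n ps = filter (\<lambda>m. m \<notin> set (pair_seq ps)) [1..<n+1]"

definition sq :: "nat \<Rightarrow> (nat \<times> nat) list \<Rightarrow> nat list" where
  "sq n ps = pair_seq ps @ rest n ps"

definition sh :: "(nat \<times> nat) list \<Rightarrow> (nat \<times> nat) list" where
  "sh ps = map (\<lambda>p. (Suc (fst p), Suc (snd p))) ps"

definition termI :: "(('b,'k::field) vec \<Rightarrow> ('b,'k) vec \<Rightarrow> 'k) \<Rightarrow> nat \<Rightarrow> (nat \<Rightarrow> ('b,'k) vec) \<Rightarrow> (nat \<times> nat) list \<Rightarrow> ('b,'k) tens" where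
  "termI F n x ps = vsmult (of_int ((-1) ^ ninv (sq n ps)) * (\<Prod>l<length ps. F (x (fst (ps ! l))) (x (snd (ps ! l)))))
      (tens_list (map x (rest n ps)))"

lemma set_upt1: "set [1..<n+1] = {1..n}"
  by (simp only: set_upt Suc_eq_plus1[symmetric] atLeastLessThanSuc_atLeastAtMost)

lemma upt_shift: "[1..<Suc n + 1] = 1 # map Suc [1..<n+1]"
  by (simp add: map_Suc_upt upt_conv_Cons del: upt_Suc)

lemma pair_seq_sh: "pair_seq (sh ps) = map Suc (pair_seq ps)"
  by (induction ps) (auto simp: sh_def)

lemma length_sh[simp]: "length (sh ps) = length ps"
  by (simp add: sh_def)

lemma AP_sub: "ps \<in> AP n \<Longrightarrow> set (pair_seq ps) \<subseteq> {1..n}"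
  by (force simp: AP_def set_pair_seq)

lemma set_rest: "set (rest n ps) = {1..n} - set (pair_seq ps)"
  by (auto simp: rest_def set_upt1)

lemma distinct_rest: "distinct (rest n ps)"
  by (simp add: rest_def del: upt_Suc)

lemma sq_distinct: "ps \<in> AP n \<Longrightarrow> distinct (sq n ps)"
  by (auto simp: sq_def AP_def distinct_rest set_rest)

lemma sq_set: "ps \<in> AP n \<Longrightarrow> set (sq n ps) = {1..n}"
  using AP_sub[of ps n] by (auto simp: sq_def set_rest)

lemma AP_length: assumes "ps \<in> AP n" shows "2 * length ps \<le> n"
proof -
  have "2 * length ps = card (set (pair_seq ps))"
    using assms by (simp add: AP_def distinct_card length_pair_seq)
  also have "\<dots> \<le> card {1..n}" by (rule card_mono[OF _ AP_sub[OF assms]]) simp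
  finally show ?thesis by simp
qed

lemma finite_AP: "finite (AP n)"
proof (rule finite_subset)
  show "AP n \<subseteq> {ps. set ps \<subseteq> {1..n} \<times> {1..n} \<and> length ps \<le> n}"
  proof
    fix ps assume ps: "ps \<in> AP n"
    have "set ps \<subseteq> {1..n} \<times> {1..n}"
    proof
      fix p assume "p \<in> set ps"
      then have "fst p \<in> set (pair_seq ps)" "snd p \<in> set (pair_seq ps)" by (auto simp: set_pair_seq)
      then show "p \<in> {1..n} \<times> {1..n}" using AP_sub[OF ps] by (cases p) auto
    qed
    moreover have "length ps \<le> n" using AP_length[OF ps] by simp
    ultimately show "ps \<in> {ps. set ps \<subseteq> {1..n} \<times> {1..n} \<and> length ps \<le> n}" by simp
  qed
  show "finite {ps. set ps \<subseteq> {1..n} \<times> {1..n} \<and> length ps \<le> n}"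
    by (rule finite_lists_length_le) simp
qed

lemma AP_0: "AP 0 = {[]}"
proof -
  have "ps = []" if "ps \<in> AP 0" for ps
  proof (cases ps)
    case (Cons p qs)
    then have "fst p < snd p \<and> snd p \<le> 0" using that by (auto simp: AP_def split_beta)
    then have False by linarith
    then show ?thesis ..
  qed simp
  then show ?thesis by (auto simp: AP_def)
qed


lemma no0_iff: "(0 \<notin> set (pair_seq ps)) = (\<forall>p\<in>set ps. fst p \<noteq> 0 \<and> snd p \<noteq> 0)"
  unfolding set_pair_seq by (simp add: image_iff) (metis)

lemma AP_no0: "ps \<in> AP n \<Longrightarrow> 0 \<notin> set (pair_seq ps)"
  using AP_sub by fastforce

lemma sh_AP: "(sh ps \<in> AP (Suc n) \<and> Suc 0 \<notin> set (pair_seq (sh ps))) \<longleftrightarrow> ps \<in> AP n"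
proof -
  have d: "distinct (pair_seq (sh ps)) = distinct (pair_seq ps)"
    by (simp add: pair_seq_sh distinct_map)
  have s: "sorted_wrt (<) (map fst (sh ps)) = sorted_wrt (<) (map fst ps)"
    by (simp add: sh_def sorted_wrt_map)
  have o1: "(Suc 0 \<notin> set (pair_seq (sh ps))) = (0 \<notin> set (pair_seq ps))"
    by (auto simp: pair_seq_sh)
  have o2: "(0 \<notin> set (pair_seq ps)) = (\<forall>p\<in>set ps. fst p \<noteq> 0 \<and> snd p \<noteq> 0)"
    unfolding set_pair_seq by (simp add: image_iff) (metis)
  note o = trans[OF o1 o2]
  have b: "(\<forall>(i,j)\<in>set (sh ps). 1 \<le> i \<and> i < j \<and> j \<le> Suc n) = (\<forall>p\<in>set ps. fst p < snd p \<and> snd p \<le> n)"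
    by (auto simp: sh_def)
  show ?thesis unfolding AP_def mem_Collect_eq d s o b by (auto simp: split_beta)
qed

lemma unsh: assumes "\<forall>p\<in>set ps. fst p \<noteq> 0 \<and> snd p \<noteq> 0"
  shows "ps = sh (map (\<lambda>p. (fst p - 1, snd p - 1)) ps)"
  using assms by (induction ps) (auto simp: sh_def)

lemma AP_head:
  assumes ps: "ps \<in> AP m" and one: "Suc 0 \<in> set (pair_seq ps)"
  shows "\<exists>j qs. ps = (Suc 0, j) # qs"
proof (cases ps)
  case Nil then show ?thesis using one by simp
next
  case (Cons p qs)
  obtain a b where p: "p = (a, b)" by (cases p)
  have ab: "1 \<le> a" "a < b" and allq: "\<forall>(c,d)\<in>set qs. 1 \<le> c \<and> c < d" and srt: "\<forall>q\<in>set qs. a < fst q"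
    using ps by (auto simp: AP_def Cons p)
  have "a = Suc 0"
  proof (rule ccontr)
    assume "a \<noteq> Suc 0"
    then have "Suc 0 \<in> set (pair_seq qs)" using one ab by (auto simp: Cons p)
    then obtain q where q: "q \<in> set qs" "fst q = Suc 0 \<or> snd q = Suc 0" by (auto simp: set_pair_seq)
    obtain c d where qcd: "q = (c, d)" by (cases q)
    have "case q of (c, d) \<Rightarrow> 1 \<le> c \<and> c < d" using allq q(1) by blast
    then have cd: "1 \<le> c" "c < d" using qcd by simp_all
    have "a < c" using srt q(1) qcd by force
    then show False using cd ab q(2) qcd by simp
  qed
  then show ?thesis using Cons p by blast
qed

lemma AP_tail: "p # qs \<in> AP m \<Longrightarrow> qs \<in> AP m"
  by (auto simp: AP_def)

lemma filter_neq_nth: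
  assumes "distinct r" "m < length r"
  shows "filter (\<lambda>i. i \<noteq> r ! m) r = take m r @ drop (Suc m) r"
proof -
  have "distinct (take m r @ r ! m # drop (Suc m) r)"
    using assms(1) unfolding id_take_nth_drop[OF assms(2), symmetric] .
  then have nt: "r ! m \<notin> set (take m r)" "r ! m \<notin> set (drop (Suc m) r)" by simp_all
  have f1: "filter (\<lambda>i. i \<noteq> r ! m) (take m r) = take m r"
    by (rule filter_True) (use nt(1) in blast)
  have f2: "filter (\<lambda>i. i \<noteq> r ! m) (drop (Suc m) r) = drop (Suc m) r"
    by (rule filter_True) (use nt(2) in blast)
  have "filter (\<lambda>i. i \<noteq> r ! m) r = filter (\<lambda>i. i \<noteq> r ! m) (take m r @ r ! m # drop (Suc m) r)"
    by (simp only: id_take_nth_drop[OF assms(2), symmetric])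
  also have "\<dots> = take m r @ drop (Suc m) r"
    by (simp only: filter_append f1 f2 filter.simps if_False simp_thms)
  finally show ?thesis .
qed

lemma nth_notin_take:
  assumes "distinct r" "m < length r"
  shows "r ! m \<notin> set (take m r)"
proof -
  have "distinct (take m r @ r ! m # drop (Suc m) r)"
    using assms(1) unfolding id_take_nth_drop[OF assms(2), symmetric] .
  then show ?thesis by auto
qed

definition consB :: "nat \<Rightarrow> (nat \<times> nat) list \<times> nat \<Rightarrow> (nat \<times> nat) list" where
  "consB n q = (Suc 0, Suc (rest n (fst q) ! snd q)) # sh (fst q)"

lemma sh_inj: "inj sh"
  unfolding sh_def by (rule inj_mapI) (auto simp: inj_def)

lemma consB_AP:
  assumes ps: "ps \<in> AP n" and m: "m < length (rest n ps)"
  shows "consB n (ps, m) \<in> AP (Suc n)" "Suc 0 \<in> set (pair_seq (consB n (ps, m)))"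
proof -
  let ?j = "rest n ps ! m"
  have j: "?j \<in> set (rest n ps)" using m by simp
  then have j1: "1 \<le> ?j" "?j \<le> n" "?j \<notin> set (pair_seq ps)" by (auto simp: set_rest)
  have shA: "sh ps \<in> AP (Suc n)" "Suc 0 \<notin> set (pair_seq (sh ps))" using sh_AP ps by blast+
  have no0: "0 \<notin> set (pair_seq ps)" by (rule AP_no0[OF ps])
  have fsts: "\<forall>q\<in>set (sh ps). Suc 0 < fst q"
  proof
    fix q assume "q \<in> set (sh ps)"
    then obtain p where p: "p \<in> set ps" "q = (Suc (fst p), Suc (snd p))" by (auto simp: sh_def)
    then have "fst p \<noteq> 0" using no0 unfolding no0_iff by blast
    then show "Suc 0 < fst q" using p by simp
  qed
  have A1: "distinct (pair_seq ps)" using ps unfolding AP_def by blast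
  have A2: "\<forall>(i,j)\<in>set (sh ps). 1 \<le> i \<and> i < j \<and> j \<le> Suc n" using shA(1) unfolding AP_def by blast
  have A3: "sorted_wrt (<) (map fst (sh ps))" using shA(1) unfolding AP_def by blast
  have e: "pair_seq (consB n (ps, m)) = Suc 0 # Suc ?j # map Suc (pair_seq ps)"
    by (simp add: consB_def pair_seq_sh)
  have n1: "Suc 0 \<notin> set (map Suc (pair_seq ps))" using no0 by auto
  have n2: "Suc ?j \<notin> set (map Suc (pair_seq ps))" using j1(3) by auto
  have d: "distinct (pair_seq (consB n (ps, m)))"
    unfolding e using A1 n1 n2 j1(1) by (simp add: distinct_map)
  have b: "\<forall>(i,j)\<in>set (consB n (ps, m)). 1 \<le> i \<and> i < j \<and> j \<le> Suc n"
  proof -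
    have "set (consB n (ps, m)) = insert (Suc 0, Suc ?j) (set (sh ps))" by (simp add: consB_def)
    then show ?thesis using A2 j1(1,2) by simp
  qed
  have so: "sorted_wrt (<) (map fst (consB n (ps, m)))"
  proof -
    have "map fst (consB n (ps, m)) = Suc 0 # map fst (sh ps)" by (simp add: consB_def)
    then show ?thesis using A3 fsts by simp
  qed
  show "consB n (ps, m) \<in> AP (Suc n)" unfolding AP_def using d b so by blast
  show "Suc 0 \<in> set (pair_seq (consB n (ps, m)))" by (simp add: consB_def)
qed

lemma AP_Suc_split:
  "AP (Suc n) = sh ` AP n \<union> consB n ` (SIGMA ps:AP n. {..<length (rest n ps)})"
proof
  show "sh ` AP n \<union> consB n ` (SIGMA ps:AP n. {..<length (rest n ps)}) \<subseteq> AP (Suc n)"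
    using sh_AP consB_AP(1) by blast
  show "AP (Suc n) \<subseteq> sh ` AP n \<union> consB n ` (SIGMA ps:AP n. {..<length (rest n ps)})"
  proof
    fix ps' assume ps': "ps' \<in> AP (Suc n)"
    have no0: "\<forall>p\<in>set ps'. fst p \<noteq> 0 \<and> snd p \<noteq> 0" using AP_no0[OF ps'] unfolding no0_iff .
    show "ps' \<in> sh ` AP n \<union> consB n ` (SIGMA ps:AP n. {..<length (rest n ps)})"
    proof (cases "Suc 0 \<in> set (pair_seq ps')")
      case False
      define ps where "ps = map (\<lambda>p. (fst p - 1, snd p - 1)) ps'"
      have e: "ps' = sh ps" using unsh[OF no0] ps_def by simp
      then have "ps \<in> AP n" using sh_AP ps' False by blast
      then show ?thesis using e by blast
    next
      case True
      then obtain j qs where e: "ps' = (Suc 0, j) # qs" using AP_head[OF ps'] by blast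
      have qs: "qs \<in> AP (Suc n)" using AP_tail ps' e by blast
      have dd: "distinct (Suc 0 # j # pair_seq qs)" using ps' e by (simp add: AP_def)
      have q1: "Suc 0 \<notin> set (pair_seq qs)" using dd by simp
      have no0q: "\<forall>p\<in>set qs. fst p \<noteq> 0 \<and> snd p \<noteq> 0" using no0 e by simp
      define ps where "ps = map (\<lambda>p. (fst p - 1, snd p - 1)) qs"
      have eq: "qs = sh ps" using unsh[OF no0q] ps_def by simp
      have psA: "ps \<in> AP n" using sh_AP qs q1 eq by blast
      have jb: "1 < j" "j \<le> Suc n" using ps' e by (auto simp: AP_def)
      define j' where "j' = j - 1"
      have j': "j = Suc j'" "1 \<le> j'" "j' \<le> n" using jb unfolding j'_def by simp_all
      have "j \<notin> set (pair_seq qs)" using dd by simp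
      then have "j' \<notin> set (pair_seq ps)" using eq j' by (auto simp: pair_seq_sh)
      then have "j' \<in> set (rest n ps)" using j' by (simp add: set_rest)
      then obtain m where m: "m < length (rest n ps)" "rest n ps ! m = j'" by (metis in_set_conv_nth)
      have "ps' = consB n (ps, m)" using e eq m j' by (simp add: consB_def)
      then show ?thesis using psA m by blast
    qed
  qed
qed

lemma AP_Suc_sum:
  "(\<Sum>ps'\<in>AP (Suc n). g ps') = (\<Sum>ps\<in>AP n. g (sh ps)) + (\<Sum>ps\<in>AP n. \<Sum>m<length (rest n ps). g (consB n (ps, m)))"
proof -
  have fin: "finite (SIGMA ps:AP n. {..<length (rest n ps)})" by (intro finite_SigmaI finite_AP finite_lessThan)
  have d1: "\<forall>x\<in>sh ` AP n. Suc 0 \<notin> set (pair_seq x)" using sh_AP by blast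
  have d2: "\<forall>x\<in>consB n ` (SIGMA ps:AP n. {..<length (rest n ps)}). Suc 0 \<in> set (pair_seq x)"
    using consB_AP(2) by blast
  have disj: "sh ` AP n \<inter> consB n ` (SIGMA ps:AP n. {..<length (rest n ps)}) = {}"
    using d1 d2 by blast
  have inj1: "inj_on sh (AP n)" by (rule inj_on_subset[OF sh_inj]) simp
  have inj2: "inj_on (consB n) (SIGMA ps:AP n. {..<length (rest n ps)})"
  proof (rule inj_onI)
    fix q q' assume q: "q \<in> (SIGMA ps:AP n. {..<length (rest n ps)})" and q': "q' \<in> (SIGMA ps:AP n. {..<length (rest n ps)})"
      and e: "consB n q = consB n q'"
    obtain ps m where qq: "q = (ps, m)" by (cases q)
    obtain ps' m' where qq': "q' = (ps', m')" by (cases q')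
    have "sh ps = sh ps'" using e by (simp add: consB_def qq qq')
    then have pe: "ps = ps'" using sh_inj by (simp add: inj_def)
    have "rest n ps ! m = rest n ps ! m'" using e by (simp add: consB_def qq qq' pe)
    moreover have mm: "m < length (rest n ps)" "m' < length (rest n ps)" using q q' qq qq' pe by simp_all
    ultimately have "m = m'" using nth_eq_iff_index_eq[OF distinct_rest mm] by simp
    then show "q = q'" using qq qq' pe by simp
  qed
  have "(\<Sum>ps'\<in>AP (Suc n). g ps') = (\<Sum>ps'\<in>sh ` AP n. g ps') + (\<Sum>ps'\<in>consB n ` (SIGMA ps:AP n. {..<length (rest n ps)}). g ps')"
    unfolding AP_Suc_split by (rule sum.union_disjoint) (simp_all add: finite_AP fin disj)
  also have "\<dots> = (\<Sum>ps\<in>AP n. g (sh ps)) + (\<Sum>q\<in>(SIGMA ps:AP n. {..<length (rest n ps)}). g (consB n q))"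
    by (simp add: sum.reindex[OF inj1] sum.reindex[OF inj2])
  also have "(\<Sum>q\<in>(SIGMA ps:AP n. {..<length (rest n ps)}). g (consB n q)) = (\<Sum>ps\<in>AP n. \<Sum>m<length (rest n ps). g (consB n (ps, m)))"
  proof -
    have "(\<Sum>ps\<in>AP n. \<Sum>m<length (rest n ps). g (consB n (ps, m))) = (\<Sum>(ps,m)\<in>(SIGMA ps:AP n. {..<length (rest n ps)}). g (consB n (ps, m)))"
      by (rule sum.Sigma) (use finite_AP in auto)
    then show ?thesis by (simp add: split_beta)
  qed
  finally show ?thesis .
qed

lemma Suc_img[simp]: "(Suc x \<in> Suc ` S) = (x \<in> S)"
  by auto

lemma pair_seq_consB: "pair_seq (consB n (ps, m)) = Suc 0 # Suc (rest n ps ! m) # map Suc (pair_seq ps)"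
  by (simp add: consB_def pair_seq_sh)

lemma rest_sh:
  assumes ps: "ps \<in> AP n" shows "rest (Suc n) (sh ps) = Suc 0 # map Suc (rest n ps)"
proof -
  have no0: "0 \<notin> set (pair_seq ps)" by (rule AP_no0[OF ps])
  have "rest (Suc n) (sh ps) = filter (\<lambda>m. m \<notin> set (map Suc (pair_seq ps))) (1 # map Suc [1..<n+1])"
    unfolding rest_def upt_shift pair_seq_sh ..
  also have "\<dots> = Suc 0 # map Suc (rest n ps)"
    using no0 by (simp add: filter_map comp_def rest_def del: upt_Suc)
  finally show ?thesis .
qed

lemma sign_sh:
  assumes ps: "ps \<in> AP n" shows "(-1::int) ^ ninv (sq (Suc n) (sh ps)) = (-1) ^ ninv (sq n ps)"
proof -
  have no0: "0 \<notin> set (pair_seq ps)" by (rule AP_no0[OF ps])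
  have s: "sq (Suc n) (sh ps) = map Suc (pair_seq ps) @ Suc 0 # map Suc (rest n ps)"
    by (simp add: sq_def rest_sh[OF ps] pair_seq_sh)
  have n1: "Suc 0 \<notin> set (map Suc (pair_seq ps))" using no0 by auto
  have "(-1::int) ^ ninv (sq (Suc n) (sh ps)) =
      (-1) ^ ninv (Suc 0 # map Suc (pair_seq ps) @ map Suc (rest n ps)) * (-1) ^ length (map Suc (pair_seq ps))"
    unfolding s by (rule ninv_move_sign[OF n1])
  also have "map Suc (pair_seq ps) @ map Suc (rest n ps) = map Suc (sq n ps)" by (simp add: sq_def)
  also have "length (map Suc (pair_seq ps)) = 2 * length ps" by (simp add: length_pair_seq)
  finally show ?thesis by (simp add: ninv_one_Suc power_mult ninv_map_Suc)
qed

lemma caseA: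
  assumes ps: "ps \<in> AP n"
  shows "termI F (Suc n) x (sh ps) = tprod (emb (x (Suc 0))) (termI F n (\<lambda>i. x (Suc i)) ps)"
proof -
  have pr: "(\<Prod>l<length (sh ps). F (x (fst (sh ps ! l))) (x (snd (sh ps ! l)))) =
      (\<Prod>l<length ps. F (x (Suc (fst (ps ! l)))) (x (Suc (snd (ps ! l)))))"
    by (rule prod.cong) (auto simp: sh_def)
  show ?thesis
    unfolding termI_def sign_sh[OF ps] rest_sh[OF ps] pr
    by (simp add: tens_list_Cons tprod_smult_right comp_def)
qed

lemma rest_consB:
  assumes ps: "ps \<in> AP n" and m: "m < length (rest n ps)"
  shows "rest (Suc n) (consB n (ps, m)) = map Suc (take m (rest n ps) @ drop (Suc m) (rest n ps))"
proof -
  let ?j = "rest n ps ! m"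
  let ?S = "set (pair_seq ps)"
  have e: "pair_seq (consB n (ps, m)) = Suc 0 # Suc ?j # map Suc (pair_seq ps)"
    by (simp add: consB_def pair_seq_sh)
  have "rest (Suc n) (consB n (ps, m)) = filter (\<lambda>k. k \<notin> set (Suc 0 # Suc ?j # map Suc (pair_seq ps))) (1 # map Suc [1..<n+1])"
    unfolding rest_def upt_shift e ..
  also have "\<dots> = map Suc (filter (\<lambda>i. Suc i \<notin> set (Suc 0 # Suc ?j # map Suc (pair_seq ps))) [1..<n+1])"
    by (simp add: filter_map comp_def del: upt_Suc)
  also have "filter (\<lambda>i. Suc i \<notin> set (Suc 0 # Suc ?j # map Suc (pair_seq ps))) [1..<n+1] =
      filter (\<lambda>i. i \<notin> ?S \<and> i \<noteq> ?j) [1..<n+1]"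
    by (rule filter_cong) (auto simp del: upt_Suc)
  also have "\<dots> = filter (\<lambda>i. i \<noteq> ?j) (rest n ps)"
    by (simp add: rest_def del: upt_Suc)
  also have "\<dots> = take m (rest n ps) @ drop (Suc m) (rest n ps)"
    by (rule filter_neq_nth[OF distinct_rest m])
  finally show ?thesis .
qed

lemma sign_consB:
  assumes ps: "ps \<in> AP n" and m: "m < length (rest n ps)"
  shows "(-1::int) ^ ninv (sq (Suc n) (consB n (ps, m))) = (-1) ^ ninv (sq n ps) * (-1) ^ m"
proof -
  let ?r = "rest n ps"
  let ?j = "?r ! m"
  let ?xs = "pair_seq ps @ take m ?r"
  have s: "sq (Suc n) (consB n (ps, m)) = Suc 0 # map Suc (?j # ?xs @ drop (Suc m) ?r)"
    by (simp add: sq_def pair_seq_consB rest_consB[OF ps m])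
  have s2: "sq n ps = ?xs @ ?j # drop (Suc m) ?r"
    unfolding sq_def by (simp add: id_take_nth_drop[OF m, symmetric])
  have jr: "?j \<in> set ?r" using m by simp
  have nj: "?j \<notin> set ?xs" using jr nth_notin_take[OF distinct_rest m] by (auto simp: set_rest)
  have "(-1::int) ^ ninv (sq n ps) = (-1) ^ ninv (?j # ?xs @ drop (Suc m) ?r) * (-1) ^ length ?xs"
    unfolding s2 by (rule ninv_move_sign[OF nj])
  moreover have "length ?xs = 2 * length ps + m" using m by (simp add: length_pair_seq)
  then have "(-1::int) ^ length ?xs = (-1) ^ m" by (simp only: power_add power_mult) simp
  ultimately have "(-1::int) ^ ninv (sq n ps) = (-1) ^ ninv (?j # ?xs @ drop (Suc m) ?r) * (-1) ^ m"
    by (simp del: ninv.simps)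
  then have "(-1::int) ^ ninv (sq n ps) * (-1) ^ m = (-1) ^ ninv (?j # ?xs @ drop (Suc m) ?r) * ((-1) ^ m * (-1) ^ m)"
    by (simp del: ninv.simps add: mult.assoc)
  then have "(-1::int) ^ ninv (sq n ps) * (-1) ^ m = (-1) ^ ninv (?j # ?xs @ drop (Suc m) ?r)"
    by (simp del: ninv.simps add: power_add[symmetric])
  then show ?thesis unfolding s ninv_one_Suc by simp
qed

lemma caseB:
  assumes ps: "ps \<in> AP n" and m: "m < length (rest n ps)"
  shows "termI F (Suc n) x (consB n (ps, m)) =
    vsmult (of_int ((-1) ^ ninv (sq n ps)) * (\<Prod>l<length ps. F (x (Suc (fst (ps ! l)))) (x (Suc (snd (ps ! l))))))
      (vsmult ((-1) ^ m * F (x (Suc 0)) (map (\<lambda>i. x (Suc i)) (rest n ps) ! m))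
        (tens_list (take m (map (\<lambda>i. x (Suc i)) (rest n ps)) @ drop (Suc m) (map (\<lambda>i. x (Suc i)) (rest n ps)))))"
proof -
  have len: "length (consB n (ps, m)) = Suc (length ps)" by (simp add: consB_def)
  have pr: "(\<Prod>l<length (consB n (ps, m)). F (x (fst (consB n (ps, m) ! l))) (x (snd (consB n (ps, m) ! l)))) =
      F (x (Suc 0)) (x (Suc (rest n ps ! m))) * (\<Prod>l<length ps. F (x (Suc (fst (ps ! l)))) (x (Suc (snd (ps ! l)))))"
  proof -
    have "(\<Prod>l<length ps. F (x (fst (consB n (ps, m) ! Suc l))) (x (snd (consB n (ps, m) ! Suc l)))) =
        (\<Prod>l<length ps. F (x (Suc (fst (ps ! l)))) (x (Suc (snd (ps ! l)))))"
      by (rule prod.cong) (auto simp: consB_def sh_def)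
    then show ?thesis unfolding len prod.lessThan_Suc_shift by (simp add: consB_def)
  qed
  have tl: "map x (rest (Suc n) (consB n (ps, m))) = take m (map (\<lambda>i. x (Suc i)) (rest n ps)) @ drop (Suc m) (map (\<lambda>i. x (Suc i)) (rest n ps))"
    by (simp add: rest_consB[OF ps m] take_map drop_map)
  show ?thesis
    unfolding termI_def sign_consB[OF ps m] pr tl
    using m by (simp add: algebra_simps)
qed


lemma iop_smult: "lin_map vsmult (*) f \<Longrightarrow> iop f (vsmult c t) = vsmult c (iop f t)"
  using iop_spec unfolding ispec_def lin_map_def by blast

lemma main_gen:
  assumes F: "bilinear_form F"
  shows "lambdaF F (tens_list (map x [1..<n+1])) = (\<Sum>ps\<in>AP n. termI F n x ps)"
proof (induction n arbitrary: x)
  case 0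
  have "termI F 0 x [] = tone" by (simp add: termI_def sq_def rest_def tens_list_Nil)
  then show ?case using lambdaF_Nil[OF F] by (simp add: AP_0)
next
  case (Suc n)
  let ?y = "\<lambda>i. x (Suc i)"
  have mx: "map x [1..<Suc n + 1] = x (Suc 0) # map ?y [1..<n+1]"
    unfolding upt_shift by simp
  have lf: "lin_map vsmult (*) (F (x (Suc 0)))" by (rule bil_right[OF F])
  have liop: "lin_map vsmult vsmult (iop (F (x (Suc 0))))" using iop_spec[OF lf] by (simp add: ispec_def)
  have IH: "lambdaF F (tens_list (map ?y [1..<n+1])) = (\<Sum>ps\<in>AP n. termI F n ?y ps)" by (rule Suc.IH)
  have "lambdaF F (tens_list (map x [1..<Suc n + 1])) =
      tprod (emb (x (Suc 0))) (\<Sum>ps\<in>AP n. termI F n ?y ps) + iop (F (x (Suc 0))) (\<Sum>ps\<in>AP n. termI F n ?y ps)"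
    unfolding mx lambdaF_Cons[OF F] IH ..
  also have "tprod (emb (x (Suc 0))) (\<Sum>ps\<in>AP n. termI F n ?y ps) = (\<Sum>ps\<in>AP n. termI F (Suc n) x (sh ps))"
    unfolding tprod_sum_right by (rule sum.cong) (simp_all add: caseA)
  also have "iop (F (x (Suc 0))) (\<Sum>ps\<in>AP n. termI F n ?y ps) =
      (\<Sum>ps\<in>AP n. \<Sum>m<length (rest n ps). termI F (Suc n) x (consB n (ps, m)))"
    unfolding lin_map_sum[OF liop]
  proof (rule sum.cong)
    fix ps assume ps: "ps \<in> AP n"
    show "iop (F (x (Suc 0))) (termI F n ?y ps) = (\<Sum>m<length (rest n ps). termI F (Suc n) x (consB n (ps, m)))"
    proof -
      have "iop (F (x (Suc 0))) (termI F n ?y ps) = (\<Sum>m<length (rest n ps).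
    vsmult (of_int ((-1) ^ ninv (sq n ps)) * (\<Prod>l<length ps. F (x (Suc (fst (ps ! l)))) (x (Suc (snd (ps ! l))))))
      (vsmult ((-1) ^ m * F (x (Suc 0)) (map (\<lambda>i. x (Suc i)) (rest n ps) ! m))
        (tens_list (take m (map (\<lambda>i. x (Suc i)) (rest n ps)) @ drop (Suc m) (map (\<lambda>i. x (Suc i)) (rest n ps))))))"
        unfolding termI_def iop_smult[OF lf] iop_tens_list[OF lf] vsmult_sum_right by simp
      also have "\<dots> = (\<Sum>m<length (rest n ps). termI F (Suc n) x (consB n (ps, m)))"
        by (rule sum.cong) (simp_all add: caseB[OF ps])
      finally show ?thesis .
    qed
  qed simp
  finally show ?case by (simp add: AP_Suc_sum)
qed


lemma termI_sign:
  assumes ps: "ps \<in> AP p"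
  shows "termI F p x ps = vsmult (of_int (sign (pair_perm p ps)) *
                (\<Prod>l<length ps. F (x (fst (ps ! l))) (x (snd (ps ! l)))))
          (tens_list (List.map x (filter (\<lambda>m. m \<notin> set (pair_seq ps)) [1..<p+1])))"
proof -
  have "pair_perm p ps = perm_of_list p (sq p ps)"
    by (simp only: pair_perm_def perm_of_list_def sq_def rest_def)
  then have "sign (pair_perm p ps) = (-1) ^ ninv (sq p ps)"
    using sign_perm_of_list[OF sq_distinct[OF ps] sq_set[OF ps]] by simp
  then show ?thesis by (simp add: termI_def rest_def del: upt_Suc)
qed

lemma termI_Nil: "termI F p x [] = tens_list (map x [1..<p+1])"
proof -
  have "sq p [] = [1..<p+1]" by (simp add: sq_def rest_def del: upt_Suc)
  moreover have "ninv [1..<p+1] = 0" by (rule sorted_ninv) (simp del: upt_Suc)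
  ultimately show ?thesis by (simp add: termI_def rest_def del: upt_Suc)
qed

theorem mainTheorem5:
  fixes F :: "('b,'k::field) vec \<Rightarrow> ('b,'k) vec \<Rightarrow> 'k"
    and p :: nat and x :: "nat \<Rightarrow> ('b,'k) vec"
  assumes "bilinear_form F" and "p \<ge> 2"
  shows "lambdaF F (tens_list (List.map x [1..<p+1])) =
     tens_list (List.map x [1..<p+1]) +
     (\<Sum>k\<in>{1..p div 2}. \<Sum>ps\<in>pairings p k.
        vsmult (of_int (sign (pair_perm p ps)) *
                (\<Prod>l<k. F (x (fst (ps ! l))) (x (snd (ps ! l)))))
          (tens_list (List.map x (filter (\<lambda>m. m \<notin> set (pair_seq ps)) [1..<p+1]))))"
proof -
  have pk: "pairings p k = {ps \<in> AP p. length ps = k}" for k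
    by (auto simp: pairings_def AP_def)
  have U: "AP p - {[]} = (\<Union>k\<in>{1..p div 2}. pairings p k)"
  proof
    show "AP p - {[]} \<subseteq> (\<Union>k\<in>{1..p div 2}. pairings p k)"
    proof
      fix ps assume ps: "ps \<in> AP p - {[]}"
      then have "1 \<le> length ps" by (cases ps) auto
      moreover have "length ps \<le> p div 2" using AP_length[of ps p] ps by simp
      ultimately show "ps \<in> (\<Union>k\<in>{1..p div 2}. pairings p k)" using ps pk by auto
    qed
    show "(\<Union>k\<in>{1..p div 2}. pairings p k) \<subseteq> AP p - {[]}" using pk by auto
  qed
  have Nil: "[] \<in> AP p" by (simp add: AP_def)
  have "lambdaF F (tens_list (List.map x [1..<p+1])) = (\<Sum>ps\<in>AP p. termI F p x ps)"
    by (rule main_gen[OF assms(1)])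
  also have "\<dots> = termI F p x [] + (\<Sum>ps\<in>AP p - {[]}. termI F p x ps)"
    by (rule sum.remove[OF finite_AP Nil])
  also have "(\<Sum>ps\<in>AP p - {[]}. termI F p x ps) = (\<Sum>k\<in>{1..p div 2}. \<Sum>ps\<in>pairings p k. termI F p x ps)"
    unfolding U
    by (rule sum.UNION_disjoint) (auto simp: pk intro: finite_subset[OF _ finite_AP])
  also have "\<dots> = (\<Sum>k\<in>{1..p div 2}. \<Sum>ps\<in>pairings p k.
        vsmult (of_int (sign (pair_perm p ps)) *
                (\<Prod>l<k. F (x (fst (ps ! l))) (x (snd (ps ! l)))))
          (tens_list (List.map x (filter (\<lambda>m. m \<notin> set (pair_seq ps)) [1..<p+1]))))"
  proof (rule sum.cong[OF refl], rule sum.cong[OF refl])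
    fix k ps assume "ps \<in> pairings p k"
    then have ps: "ps \<in> AP p" "length ps = k" using pk by auto
    show "termI F p x ps = vsmult (of_int (sign (pair_perm p ps)) *
                (\<Prod>l<k. F (x (fst (ps ! l))) (x (snd (ps ! l)))))
          (tens_list (List.map x (filter (\<lambda>m. m \<notin> set (pair_seq ps)) [1..<p+1])))"
      using termI_sign[OF ps(1), of F x] unfolding ps(2) .
  qed
  finally show ?thesis by (simp only: termI_Nil)
qed

end
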